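(* Let $\mathbb{S}$ be the Sorgenfrey line and let $\Delta_2=\{(x,y)\in\mathbb{S}^2: x\leq y\}$ with the subspace topology from $\mathbb{S}^2$. Then $\Delta_2$ and $\mathbb{S}^2$ are homeomorphic.
   Context: The Sorgenfrey line $\mathbb{S}$ is the real line with the topology generated by half-open intervals $[a,b[$; $\mathbb{S}^2$ carries the product topology. *)

theory Defs
  imports "HOL-Analysis.Analysis"
begin

definition sorgenfrey :: "real topology" where
  "sorgenfrey = topology_generated_by {{a..<b} | a b. a < b}"

end

theory Submission
  imports Defs
begin


lemma sorg_open: "openin sorgenfrey U \<longleftrightarrow> (\<forall>x\<in>U. \<exists>e>0. {x..<x+e} \<subseteq> U)"
proof
  assume "openin sorgenfrey U"
  hence "generate_topology_on {{a..<b} | a b. a < b} U"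
    by (simp add: sorgenfrey_def openin_topology_generated_by_iff)
  thus "\<forall>x\<in>U. \<exists>e>0. {x..<x+e} \<subseteq> U"
  proof induct
    case Empty show ?case by simp
  next
    case (Int a b) show ?case
    proof
      fix x assume "x \<in> a \<inter> b"
      then obtain e1 e2 where "e1>0" "{x..<x+e1} \<subseteq> a" "e2>0" "{x..<x+e2} \<subseteq> b" using Int by blast
      then have "{x..<x+min e1 e2} \<subseteq> a \<inter> b" by (auto simp: subset_iff)
      then show "\<exists>e>0. {x..<x+e} \<subseteq> a \<inter> b" using \<open>e1>0\<close> \<open>e2>0\<close> by (intro exI[of _ "min e1 e2"]) auto
    qed
  next
    case (UN K) show ?case
    proof
      fix x assume "x \<in> \<Union>K" then obtain k where "k\<in>K" "x\<in>k" by blast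
      then obtain e where "e>0" "{x..<x+e} \<subseteq> k" using UN by blast
      then show "\<exists>e>0. {x..<x+e} \<subseteq> \<Union>K" using \<open>k\<in>K\<close> by blast
    qed
  next
    case (Basis s) then obtain a b where s: "s = {a..<b}" "a<b" by blast
    show ?case
    proof
      fix x assume "x \<in> s"
      then show "\<exists>e>0. {x..<x+e} \<subseteq> s" using s by (intro exI[of _ "b - x"]) auto
    qed
  qed
next
  assume H: "\<forall>x\<in>U. \<exists>e>0. {x..<x+e} \<subseteq> U"
  let ?B = "{{a..<b} | a b. a < b}"
  have "U = \<Union>{S \<in> ?B. S \<subseteq> U}"
  proof
    show "U \<subseteq> \<Union>{S \<in> ?B. S \<subseteq> U}"
    proof
      fix x assume "x \<in> U"
      then obtain e where "e>0" "{x..<x+e} \<subseteq> U" using H by blast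
      moreover have "{x..<x+e} \<in> ?B" using \<open>e>0\<close> by (intro CollectI exI[of _ x] exI[of _ "x+e"]) auto
      ultimately show "x \<in> \<Union>{S \<in> ?B. S \<subseteq> U}"
        using \<open>e>0\<close> by (intro UnionI[of "{x..<x+e}"]) auto
    qed
  qed auto
  moreover have "generate_topology_on ?B (\<Union>{S \<in> ?B. S \<subseteq> U})"
    by (rule generate_topology_on.UN) (auto intro: generate_topology_on.Basis)
  ultimately show "openin sorgenfrey U"
    by (simp add: sorgenfrey_def openin_topology_generated_by_iff)
qed

lemma topspace_sorg [simp]: "topspace sorgenfrey = UNIV"
proof -
  have "\<Union>{{a..<b} | a b. a < (b::real)} = UNIV"
  proof (rule set_eqI)
    fix x :: real show "x \<in> \<Union>{{a..<b} | a b. a < b} \<longleftrightarrow> x \<in> UNIV"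
      proof -
      have "{x..<x+1} \<in> {{a..<b} | a b. a < b}" by (intro CollectI exI[of _ x] exI[of _ "x+1"]) auto
      moreover have "x \<in> {x..<x+1}" by simp
      ultimately show ?thesis by blast
    qed
  qed
  then show ?thesis by (simp add: sorgenfrey_def)
qed

definition sbox :: "real \<times> real \<Rightarrow> real \<Rightarrow> (real \<times> real) set" where
  "sbox p d = {fst p..<fst p + d} \<times> {snd p..<snd p + d}"

lemma S2_open: "openin (prod_topology sorgenfrey sorgenfrey) W \<longleftrightarrow> (\<forall>p\<in>W. \<exists>d>0. sbox p d \<subseteq> W)"
proof
  assume "openin (prod_topology sorgenfrey sorgenfrey) W"
  then have H: "\<And>x y. (x,y)\<in>W \<Longrightarrow> \<exists>U V. openin sorgenfrey U \<and> openin sorgenfrey V \<and> x \<in> U \<and> y \<in> V \<and> U \<times> V \<subseteq> W"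
    by (simp add: openin_prod_topology_alt)
  show "\<forall>p\<in>W. \<exists>d>0. sbox p d \<subseteq> W"
  proof
    fix p assume "p \<in> W"
    then obtain x y where p: "p = (x,y)" "(x,y) \<in> W" by (cases p) auto
    then obtain U V where UV: "openin sorgenfrey U" "openin sorgenfrey V" "x \<in> U" "y \<in> V" "U \<times> V \<subseteq> W"
      using H[OF p(2)] by blast
    from UV(1) UV(3) obtain e1 where "e1>0" "{x..<x+e1} \<subseteq> U" unfolding sorg_open by blast
    from UV(2) UV(4) obtain e2 where "e2>0" "{y..<y+e2} \<subseteq> V" unfolding sorg_open by blast
    have "{x..<x+min e1 e2} \<subseteq> U"
      using \<open>{x..<x+e1} \<subseteq> U\<close> by (rule order_trans[rotated]) auto
    moreover have "{y..<y+min e1 e2} \<subseteq> V"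
      using \<open>{y..<y+e2} \<subseteq> V\<close> by (rule order_trans[rotated]) auto
    ultimately have "{x..<x+min e1 e2} \<times> {y..<y+min e1 e2} \<subseteq> U \<times> V" by blast
    then have "sbox p (min e1 e2) \<subseteq> W" using UV(5) unfolding sbox_def p by simp
    then show "\<exists>d>0. sbox p d \<subseteq> W" using \<open>e1>0\<close> \<open>e2>0\<close> by (intro exI[of _ "min e1 e2"]) auto
  qed
next
  assume H: "\<forall>p\<in>W. \<exists>d>0. sbox p d \<subseteq> W"
  have ico: "openin sorgenfrey {a..<a+d}" for a d :: real
    unfolding sorg_open by (auto intro!: exI[of _ "a + d - _"])
  show "openin (prod_topology sorgenfrey sorgenfrey) W"
    unfolding openin_prod_topology_alt
  proof (intro allI impI)
    fix x y assume "(x,y) \<in> W"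
    then obtain d where "d>0" "sbox (x,y) d \<subseteq> W" using H by blast
    then show "\<exists>U V. openin sorgenfrey U \<and> openin sorgenfrey V \<and> x \<in> U \<and> y \<in> V \<and> U \<times> V \<subseteq> W"
      by (intro exI[of _ "{x..<x+d}"] exI[of _ "{y..<y+d}"]) (auto simp: sbox_def ico)
  qed
qed

lemma sbox_open: "openin (prod_topology sorgenfrey sorgenfrey) (sbox p d)"
  unfolding S2_open
proof
  fix r assume "r \<in> sbox p d"
  then show "\<exists>d'>0. sbox r d' \<subseteq> sbox p d"
    by (intro exI[of _ "min (fst p + d - fst r) (snd p + d - snd r)"]) (auto simp: sbox_def)
qed

lemma sbox_self: "d > 0 \<Longrightarrow> p \<in> sbox p d"
  by (cases p) (auto simp: sbox_def)

lemma cont_local: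
  assumes "\<And>p. p\<in>A \<Longrightarrow> F p \<in> B"
    and "\<And>p e. p\<in>A \<Longrightarrow> e>0 \<Longrightarrow> \<exists>d>0. \<forall>q\<in>A. q \<in> sbox p d \<longrightarrow> F q \<in> sbox (F p) e"
  shows "continuous_map (subtopology (prod_topology sorgenfrey sorgenfrey) A)
            (subtopology (prod_topology sorgenfrey sorgenfrey) B) F"
  unfolding continuous_map_def
proof (intro conjI allI impI)
  show "F \<in> topspace (subtopology (prod_topology sorgenfrey sorgenfrey) A) \<rightarrow>
    topspace (subtopology (prod_topology sorgenfrey sorgenfrey) B)" using assms(1) by auto
  fix U assume "openin (subtopology (prod_topology sorgenfrey sorgenfrey) B) U"
  then obtain W where W: "openin (prod_topology sorgenfrey sorgenfrey) W" "U = W \<inter> B"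
    by (auto simp: openin_subtopology)
  let ?P = "{x \<in> topspace (subtopology (prod_topology sorgenfrey sorgenfrey) A). F x \<in> U}"
  let ?T = "\<Union>{S. \<exists>p d. S = sbox p d \<and> p \<in> A \<and> d > 0 \<and> (\<forall>q\<in>A. q \<in> sbox p d \<longrightarrow> F q \<in> W)}"
  have "openin (prod_topology sorgenfrey sorgenfrey) ?T"
    by (rule openin_Union) (auto intro: sbox_open)
  moreover have "?P = ?T \<inter> A"
  proof
    show "?P \<subseteq> ?T \<inter> A"
    proof
      fix p assume "p \<in> ?P"
      then have p: "p \<in> A" "F p \<in> W" using W by auto
      then obtain e where "e>0" "sbox (F p) e \<subseteq> W" using W(1) S2_open by meson
      then obtain d where "d>0" "\<forall>q\<in>A. q \<in> sbox p d \<longrightarrow> F q \<in> sbox (F p) e"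
        using assms(2) p by meson
      then have "sbox p d \<in> {S. \<exists>p d. S = sbox p d \<and> p \<in> A \<and> d > 0 \<and> (\<forall>q\<in>A. q \<in> sbox p d \<longrightarrow> F q \<in> W)}"
        using p \<open>sbox (F p) e \<subseteq> W\<close> by blast
      moreover have "p \<in> sbox p d" using \<open>d>0\<close> by (rule sbox_self)
      ultimately show "p \<in> ?T \<inter> A" using p by blast
    qed
    show "?T \<inter> A \<subseteq> ?P" using W assms(1) by auto
  qed
  ultimately show "openin (subtopology (prod_topology sorgenfrey sorgenfrey) A) ?P"
    by (auto simp: openin_subtopology)
qed



lemma floor_coarse:
  fixes x y :: real
  assumes "\<lfloor>(2::real)^k * x\<rfloor> = \<lfloor>2^k * y\<rfloor>" "j \<le> k"
  shows "\<lfloor>(2::real)^j * x\<rfloor> = \<lfloor>2^j * y\<rfloor>"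
proof -
  have e: "(2::real)^j * z = (2^k * z) / real_of_int (2^(k-j))" for z
  proof -
    have "(2::real)^k = 2^j * 2^(k-j)" using assms(2) by (simp flip: power_add)
    then show ?thesis by simp
  qed
  show ?thesis unfolding e by (subst (1 2) floor_divide_real_eq_div) (use assms(1) in auto)
qed

lemma floor_less_imp: "\<lfloor>a::real\<rfloor> < \<lfloor>b\<rfloor> \<Longrightarrow> a < b"
  by (meson floor_mono not_le)

lemma lvl_ex: assumes "x < y" shows "\<exists>k. \<lfloor>(2::real)^k * x\<rfloor> \<noteq> \<lfloor>2^k * y\<rfloor>"
proof -
  obtain k where k: "1/(y-x) < (2::real)^k" using real_arch_pow[of 2 "1/(y-x)"] by auto
  have "1 < 2^k * (y - x)" using k assms by (simp add: field_simps)
  then have "2^k * x + 1 < 2^k * y" by (simp add: algebra_simps)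
  then have "\<lfloor>(2::real)^k * x\<rfloor> \<noteq> \<lfloor>2^k * y\<rfloor>" by linarith
  then show ?thesis ..
qed

definition lvl :: "real \<Rightarrow> real \<Rightarrow> nat" where
  "lvl x y = (LEAST k. \<lfloor>(2::real)^k * x\<rfloor> \<noteq> \<lfloor>2^k * y\<rfloor>)"

lemma lvl_less: assumes "x < y" shows "\<lfloor>(2::real)^lvl x y * x\<rfloor> < \<lfloor>2^lvl x y * y\<rfloor>"
proof -
  have "\<lfloor>(2::real)^lvl x y * x\<rfloor> \<noteq> \<lfloor>2^lvl x y * y\<rfloor>"
    unfolding lvl_def by (rule LeastI_ex) (rule lvl_ex[OF assms])
  moreover have "\<lfloor>(2::real)^lvl x y * x\<rfloor> \<le> \<lfloor>2^lvl x y * y\<rfloor>"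
    using assms by (intro floor_mono) simp
  ultimately show ?thesis by simp
qed

lemma lvl_below: "j < lvl x y \<Longrightarrow> \<lfloor>(2::real)^j * x\<rfloor> = \<lfloor>2^j * y\<rfloor>"
  unfolding lvl_def using not_less_Least by blast

lemma lvl_eqI:
  assumes "x < y" "\<lfloor>(2::real)^lvl x y * x'\<rfloor> = \<lfloor>2^lvl x y * x\<rfloor>"
    "\<lfloor>(2::real)^lvl x y * y'\<rfloor> = \<lfloor>2^lvl x y * y\<rfloor>"
  shows "lvl x' y' = lvl x y"
proof -
  let ?k = "lvl x y"
  show ?thesis unfolding lvl_def[of x' y']
  proof (rule Least_equality)
    show "\<lfloor>(2::real)^?k * x'\<rfloor> \<noteq> \<lfloor>2^?k * y'\<rfloor>" using assms lvl_less[OF assms(1)] by simp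
  next
    fix m assume m: "\<lfloor>(2::real)^m * x'\<rfloor> \<noteq> \<lfloor>2^m * y'\<rfloor>"
    show "?k \<le> m"
    proof (rule ccontr)
      assume "\<not> ?k \<le> m"
      then have "m < ?k" by simp
      then have "\<lfloor>(2::real)^m * x'\<rfloor> = \<lfloor>2^m * x\<rfloor>" "\<lfloor>(2::real)^m * y'\<rfloor> = \<lfloor>2^m * y\<rfloor>"
        "\<lfloor>(2::real)^m * x\<rfloor> = \<lfloor>2^m * y\<rfloor>"
        using floor_coarse[OF assms(2)] floor_coarse[OF assms(3)] lvl_below by auto
      then show False using m by simp
    qed
  qed
qed

lemma lvl_gt: assumes "x < y" "\<lfloor>(2::real)^K * x\<rfloor> = \<lfloor>2^K * y\<rfloor>" shows "K < lvl x y"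
proof (rule ccontr)
  assume "\<not> K < lvl x y"
  then have "\<lfloor>(2::real)^lvl x y * x\<rfloor> = \<lfloor>2^lvl x y * y\<rfloor>" using floor_coarse[OF assms(2)] by simp
  then show False using lvl_less[OF assms(1)] by simp
qed

lemma floor_stable: "\<exists>d>0. \<forall>z'. z \<le> z' \<and> z' < z + d \<longrightarrow> \<lfloor>(2::real)^n * z'\<rfloor> = \<lfloor>2^n * z\<rfloor>"
proof -
  let ?p = "(2::real)^n"
  define d where "d = (of_int \<lfloor>?p * z\<rfloor> + 1 - ?p * z) / ?p"
  have "d > 0" unfolding d_def by (simp add: divide_pos_pos)
  moreover have "\<lfloor>?p * z'\<rfloor> = \<lfloor>?p * z\<rfloor>" if "z \<le> z'" "z' < z + d" for z'
  proof -
    have "?p * z \<le> ?p * z'" using that by simp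
    moreover have "?p * z' < ?p * (z + d)" using that by simp
    moreover have "?p * (z + d) = of_int \<lfloor>?p * z\<rfloor> + 1" unfolding d_def by (simp add: field_simps)
    ultimately show ?thesis by (intro floor_unique) linarith+
  qed
  ultimately show ?thesis by blast
qed



definition psi :: "real \<Rightarrow> real \<Rightarrow> real" where
  "psi x y = (let k = lvl x y in (of_int \<lfloor>(2::real)^k * y\<rfloor> + frac (2^Suc k * y)) / 2^k)"

definition up :: "nat \<Rightarrow> real \<Rightarrow> real" where
  "up k v = (of_int \<lfloor>(2::real)^k * v\<rfloor> + 1/2 + frac (2^k * v) / 2) / 2^k"

definition dn :: "nat \<Rightarrow> real \<Rightarrow> real" where
  "dn k u = (of_int \<lfloor>(2::real)^k * u\<rfloor> + frac (2^k * u) / 2) / 2^k"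

definition sF :: "real \<times> real \<Rightarrow> real \<times> real" where
  "sF p = (case p of (x,y) \<Rightarrow> if x = y then (x,y)
     else if even \<lfloor>(2::real)^Suc (lvl x y) * y\<rfloor> then (psi x y, x) else (x, psi x y))"

definition sG :: "real \<times> real \<Rightarrow> real \<times> real" where
  "sG q = (case q of (u,v) \<Rightarrow> if u = v then (u,v)
     else if u < v then (u, up (lvl u v) v) else (v, dn (lvl v u) u))"

lemma floor_frac_add: "0 \<le> f \<Longrightarrow> f < 1 \<Longrightarrow> \<lfloor>of_int n + (f::real)\<rfloor> = n"
  by (intro floor_unique) auto

lemma frac_frac_add: "0 \<le> f \<Longrightarrow> f < 1 \<Longrightarrow> frac (of_int n + (f::real)) = f"
  unfolding frac_def using floor_frac_add by simp

lemma floor_double: "\<lfloor>2 * (a::real)\<rfloor> = 2 * \<lfloor>a\<rfloor> \<or> \<lfloor>2 * a\<rfloor> = 2 * \<lfloor>a\<rfloor> + 1"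
proof -
  have "\<lfloor>2 * a\<rfloor> \<ge> 2 * \<lfloor>a\<rfloor>" by (simp add: le_floor_iff)
  moreover have "\<lfloor>2 * a\<rfloor> < 2 * \<lfloor>a\<rfloor> + 2"
    using floor_correct[of a] floor_less_iff[of "2*a" "2 * \<lfloor>a\<rfloor> + 2"] by linarith
  ultimately show ?thesis by linarith
qed

lemma floor_double_even: "even \<lfloor>2 * (a::real)\<rfloor> \<longleftrightarrow> \<lfloor>2 * a\<rfloor> = 2 * \<lfloor>a\<rfloor>"
  using floor_double[of a] by auto

lemma pow_Suc_mult: "(2::real)^Suc k * y = 2 * (2^k * y)" by simp

lemma psi_eq: "2^lvl x y * psi x y = of_int \<lfloor>(2::real)^lvl x y * y\<rfloor> + frac (2^Suc (lvl x y) * y)"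
  by (simp add: psi_def Let_def)

lemma psi_floor: "\<lfloor>2^lvl x y * psi x y\<rfloor> = \<lfloor>(2::real)^lvl x y * y\<rfloor>"
  unfolding psi_eq by (rule floor_frac_add) (auto simp: frac_lt_1)

lemma psi_bounds:
  assumes "x < y"
  shows "x < psi x y" "psi x y < y + 1 / 2^lvl x y"
proof -
  let ?k = "lvl x y"
  have p: "(0::real) < 2^?k" by simp
  have a: "2^?k * x < of_int \<lfloor>(2::real)^?k * x\<rfloor> + 1" by linarith
  have b0: "\<lfloor>(2::real)^?k * x\<rfloor> + 1 \<le> \<lfloor>(2::real)^?k * y\<rfloor>"
    using lvl_less[OF assms] by simp
  then have "real_of_int (\<lfloor>(2::real)^?k * x\<rfloor> + 1) \<le> of_int \<lfloor>(2::real)^?k * y\<rfloor>"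
    by (simp only: of_int_le_iff)
  then have b: "real_of_int \<lfloor>(2::real)^?k * x\<rfloor> + 1 \<le> of_int \<lfloor>(2::real)^?k * y\<rfloor>"
    by simp
  have c: "of_int \<lfloor>(2::real)^?k * y\<rfloor> \<le> 2^?k * psi x y"
    unfolding psi_eq by (simp add: frac_ge_0)
  from a b c have "2^?k * x < 2^?k * psi x y" by linarith
  then show "x < psi x y" using p by simp
  have "2^?k * psi x y < of_int \<lfloor>(2::real)^?k * y\<rfloor> + 1"
    unfolding psi_eq by (simp add: frac_lt_1)
  also have "\<dots> \<le> 2^?k * y + 1" by linarith
  finally have "2^?k * psi x y < 2^?k * (y + 1 / 2^?k)" by (simp add: algebra_simps)
  then show "psi x y < y + 1 / 2^lvl x y" using p by simp
qed

lemma up_eq: "2^k * up k v = of_int \<lfloor>(2::real)^k * v\<rfloor> + 1/2 + frac (2^k * v) / 2"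
  by (simp add: up_def)

lemma dn_eq: "2^k * dn k u = of_int \<lfloor>(2::real)^k * u\<rfloor> + frac (2^k * u) / 2"
  by (simp add: dn_def)

lemma up_bounds:
  assumes "u < v"
  shows "u < up (lvl u v) v" "up (lvl u v) v < v + 1 / 2^lvl u v"
proof -
  let ?k = "lvl u v"
  have p: "(0::real) < 2^?k" by simp
  have a: "2^?k * u < of_int \<lfloor>(2::real)^?k * u\<rfloor> + 1" by linarith
  have b0: "\<lfloor>(2::real)^?k * u\<rfloor> + 1 \<le> \<lfloor>(2::real)^?k * v\<rfloor>"
    using lvl_less[OF assms] by simp
  then have "real_of_int (\<lfloor>(2::real)^?k * u\<rfloor> + 1) \<le> of_int \<lfloor>(2::real)^?k * v\<rfloor>"
    by (simp only: of_int_le_iff)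
  then have b: "real_of_int \<lfloor>(2::real)^?k * u\<rfloor> + 1 \<le> of_int \<lfloor>(2::real)^?k * v\<rfloor>"
    by simp
  have c: "of_int \<lfloor>(2::real)^?k * v\<rfloor> \<le> 2^?k * up ?k v"
    unfolding up_eq by (simp add: frac_ge_0)
  from a b c have "2^?k * u < 2^?k * up ?k v" by linarith
  then show "u < up ?k v" using p by simp
  have "2^?k * up ?k v < of_int \<lfloor>(2::real)^?k * v\<rfloor> + 1"
    unfolding up_eq using frac_lt_1[of "2^?k * v"] by simp
  also have "\<dots> \<le> 2^?k * v + 1" by linarith
  finally have "2^?k * up ?k v < 2^?k * (v + 1 / 2^?k)" by (simp add: algebra_simps)
  then show "up ?k v < v + 1 / 2^?k" using p by simp
qed

lemma dn_bounds:
  assumes "v < u"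
  shows "v < dn (lvl v u) u" "dn (lvl v u) u < u + 1 / 2^lvl v u"
proof -
  let ?k = "lvl v u"
  have p: "(0::real) < 2^?k" by simp
  have a: "2^?k * v < of_int \<lfloor>(2::real)^?k * v\<rfloor> + 1" by linarith
  have b0: "\<lfloor>(2::real)^?k * v\<rfloor> + 1 \<le> \<lfloor>(2::real)^?k * u\<rfloor>"
    using lvl_less[OF assms] by simp
  then have "real_of_int (\<lfloor>(2::real)^?k * v\<rfloor> + 1) \<le> of_int \<lfloor>(2::real)^?k * u\<rfloor>"
    by (simp only: of_int_le_iff)
  then have b: "real_of_int \<lfloor>(2::real)^?k * v\<rfloor> + 1 \<le> of_int \<lfloor>(2::real)^?k * u\<rfloor>"
    by simp
  have c: "of_int \<lfloor>(2::real)^?k * u\<rfloor> \<le> 2^?k * dn ?k u"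
    unfolding dn_eq by (simp add: frac_ge_0)
  from a b c have "2^?k * v < 2^?k * dn ?k u" by linarith
  then show "v < dn ?k u" using p by simp
  have "2^?k * dn ?k u < of_int \<lfloor>(2::real)^?k * u\<rfloor> + 1"
    unfolding dn_eq using frac_lt_1[of "2^?k * u"] by simp
  also have "\<dots> \<le> 2^?k * u + 1" by linarith
  finally have "2^?k * dn ?k u < 2^?k * (u + 1 / 2^?k)" by (simp add: algebra_simps)
  then show "dn ?k u < u + 1 / 2^?k" using p by simp
qed

lemma up_floor: "\<lfloor>(2::real)^k * up k v\<rfloor> = \<lfloor>2^k * v\<rfloor>"
  unfolding up_eq using frac_lt_1[of "2^k * v"] frac_ge_0[of "2^k * v"]
  by (subst add.assoc, intro floor_frac_add) auto

lemma dn_floor: "\<lfloor>(2::real)^k * dn k u\<rfloor> = \<lfloor>2^k * u\<rfloor>"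
  unfolding dn_eq using frac_lt_1[of "2^k * u"] frac_ge_0[of "2^k * u"]
  by (intro floor_frac_add) auto



lemma GF: assumes "x < y" shows "sG (sF (x,y)) = (x,y)"
proof -
  define k where "k = lvl x y"
  define a where "a = (2::real)^k * y"
  have p: "(0::real) < 2^k" by simp
  have hk: "lvl x (psi x y) = k" unfolding k_def by (rule lvl_eqI[OF assms]) (simp_all add: psi_floor)
  have px: "x < psi x y" using psi_bounds[OF assms] by simp
  have fl: "\<lfloor>2^k * psi x y\<rfloor> = \<lfloor>a\<rfloor>" unfolding a_def k_def by (rule psi_floor)
  have pe: "2^k * psi x y = of_int \<lfloor>a\<rfloor> + frac (2 * a)" unfolding a_def k_def psi_eq by (simp add: mult.assoc)
  have fr: "frac (2^k * psi x y) = frac (2 * a)" unfolding pe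
    by (rule frac_frac_add) (auto simp: frac_lt_1)
  show ?thesis
  proof (cases "even \<lfloor>2 * a\<rfloor>")
    case True
    then have e2: "\<lfloor>2 * a\<rfloor> = 2 * \<lfloor>a\<rfloor>" using floor_double_even by blast
    have sf: "sF (x,y) = (psi x y, x)" using True assms unfolding sF_def a_def k_def by (simp add: mult.assoc)
    have "2^k * dn k (psi x y) = of_int \<lfloor>a\<rfloor> + frac (2 * a) / 2" unfolding dn_eq fl fr ..
    also have "\<dots> = a" using e2 unfolding frac_def by (simp add: field_simps)
    finally have "dn k (psi x y) = y" using p unfolding a_def by simp
    then show ?thesis using sf px hk unfolding sG_def by simp
  next
    case False
    then have e2: "\<lfloor>2 * a\<rfloor> = 2 * \<lfloor>a\<rfloor> + 1" using floor_double[of a] by auto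
    have sf: "sF (x,y) = (x, psi x y)" using False assms unfolding sF_def a_def k_def by (simp add: mult.assoc)
    have "2^k * up k (psi x y) = of_int \<lfloor>a\<rfloor> + 1/2 + frac (2 * a) / 2" unfolding up_eq fl fr ..
    also have "\<dots> = a" using e2 unfolding frac_def by (simp add: field_simps)
    finally have "up k (psi x y) = y" using p unfolding a_def by simp
    then show ?thesis using sf px hk unfolding sG_def by simp
  qed
qed

lemma FG1: assumes "u < v" shows "sF (sG (u,v)) = (u,v)"
proof -
  define k where "k = lvl u v"
  define a where "a = (2::real)^k * v"
  define w where "w = up k v"
  have p: "(0::real) < 2^k" by simp
  have uw: "u < w" unfolding w_def k_def using up_bounds[OF assms] by simp
  have hk: "lvl u w = k" unfolding k_def w_def by (rule lvl_eqI[OF assms]) (simp_all add: up_floor)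
  have sg: "sG (u,v) = (u, w)" using assms unfolding sG_def w_def k_def by simp
  have we: "2^k * w = of_int \<lfloor>a\<rfloor> + 1/2 + frac a / 2" unfolding w_def a_def up_eq ..
  have w2: "2^Suc k * w = of_int (2 * \<lfloor>a\<rfloor> + 1) + frac a"
    using we by (simp add: algebra_simps)
  have fw2: "\<lfloor>2^Suc k * w\<rfloor> = 2 * \<lfloor>a\<rfloor> + 1" unfolding w2
    by (rule floor_frac_add) (auto simp: frac_lt_1)
  have frw2: "frac (2^Suc k * w) = frac a" unfolding w2
    by (rule frac_frac_add) (auto simp: frac_lt_1)
  have sf: "sF (u, w) = (u, psi u w)" using uw fw2 hk unfolding sF_def by simp
  have "2^k * psi u w = of_int \<lfloor>a\<rfloor> + frac a"
    using psi_eq[of u w] unfolding hk frw2 using up_floor[of k v] unfolding w_def a_def by simp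
  also have "\<dots> = a" unfolding frac_def by simp
  finally have "psi u w = v" using p unfolding a_def by simp
  then show ?thesis using sg sf by simp
qed

lemma FG2: assumes "v < u" shows "sF (sG (u,v)) = (u,v)"
proof -
  define k where "k = lvl v u"
  define a where "a = (2::real)^k * u"
  define w where "w = dn k u"
  have p: "(0::real) < 2^k" by simp
  have vw: "v < w" unfolding w_def k_def using dn_bounds[OF assms] by simp
  have hk: "lvl v w = k" unfolding k_def w_def by (rule lvl_eqI[OF assms]) (simp_all add: dn_floor)
  have sg: "sG (u,v) = (v, w)" using assms unfolding sG_def w_def k_def by simp
  have we: "2^k * w = of_int \<lfloor>a\<rfloor> + frac a / 2" unfolding w_def a_def dn_eq ..
  have w2: "2^Suc k * w = of_int (2 * \<lfloor>a\<rfloor>) + frac a"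
    using we by (simp add: algebra_simps)
  have fw2: "\<lfloor>2^Suc k * w\<rfloor> = 2 * \<lfloor>a\<rfloor>" unfolding w2
    by (rule floor_frac_add) (auto simp: frac_lt_1)
  have frw2: "frac (2^Suc k * w) = frac a" unfolding w2
    by (rule frac_frac_add) (auto simp: frac_lt_1)
  have sf: "sF (v, w) = (psi v w, v)" using vw fw2 hk unfolding sF_def by simp
  have "2^k * psi v w = of_int \<lfloor>a\<rfloor> + frac a"
    using psi_eq[of v w] unfolding hk frw2 using dn_floor[of k u] unfolding w_def a_def by simp
  also have "\<dots> = a" unfolding frac_def by simp
  finally have "psi v w = u" using p unfolding a_def by simp
  then show ?thesis using sg sf by simp
qed



lemma smallK: "e > 0 \<Longrightarrow> \<exists>K. 1 / (2::real)^K < e/2"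
proof -
  assume e: "e > 0"
  obtain K where "2/e < (2::real)^K" using real_arch_pow[of 2 "2/e"] by auto
  then have "1 / (2::real)^K < e/2" using e by (simp add: field_simps)
  then show ?thesis ..
qed

lemma pow_le_inv: "K < l \<Longrightarrow> 1 / (2::real)^l \<le> 1 / 2^K"
  by (simp add: frac_le power_increasing)

lemma psi_diff:
  assumes "lvl x' y' = lvl x y" "\<lfloor>(2::real)^Suc (lvl x y) * y'\<rfloor> = \<lfloor>2^Suc (lvl x y) * y\<rfloor>"
  shows "psi x' y' = psi x y + 2 * (y' - y)"
proof -
  let ?k = "lvl x y"
  have f: "\<lfloor>(2::real)^?k * y'\<rfloor> = \<lfloor>2^?k * y\<rfloor>" by (rule floor_coarse[OF assms(2)]) simp
  have "2^?k * psi x' y' = 2^?k * (psi x y + 2 * (y' - y))"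
    using psi_eq[of x' y'] psi_eq[of x y] assms(1) assms(2) f by (simp add: frac_def algebra_simps)
  then show ?thesis by simp
qed

lemma up_diff: "\<lfloor>(2::real)^k * v'\<rfloor> = \<lfloor>2^k * v\<rfloor> \<Longrightarrow> up k v' = up k v + (v' - v)/2"
  unfolding up_def frac_def by (simp add: field_simps)

lemma dn_diff: "\<lfloor>(2::real)^k * v'\<rfloor> = \<lfloor>2^k * v\<rfloor> \<Longrightarrow> dn k v' = dn k v + (v' - v)/2"
  unfolding dn_def frac_def by (simp add: field_simps)

lemma sbox_iff: "(a,b) \<in> sbox (x,y) d \<longleftrightarrow> x \<le> a \<and> a < x + d \<and> y \<le> b \<and> b < y + d"
  by (simp add: sbox_def)

lemma contF: "continuous_map (subtopology (prod_topology sorgenfrey sorgenfrey) {(x, y). x \<le> y})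
   (subtopology (prod_topology sorgenfrey sorgenfrey) UNIV) sF"
proof (rule cont_local)
  fix p :: "real \<times> real" and e :: real
  assume pD: "p \<in> {(x, y). x \<le> y}" and e: "e > 0"
  obtain x y where p: "p = (x,y)" and xy: "x \<le> y" using pD by auto
  show "\<exists>d>0. \<forall>q\<in>{(x, y). x \<le> y}. q \<in> sbox p d \<longrightarrow> sF q \<in> sbox (sF p) e"
  proof (cases "x = y")
    case True
    obtain K where K: "1 / (2::real)^K < e/2" using smallK[OF e] by blast
    obtain d0 where d0: "d0 > 0" "\<forall>z'. x \<le> z' \<and> z' < x + d0 \<longrightarrow> \<lfloor>(2::real)^K * z'\<rfloor> = \<lfloor>2^K * x\<rfloor>"
      using floor_stable by blast
    define d where "d = min d0 (e/2)"
    have "d > 0" using d0 e by (simp add: d_def)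
    moreover have "sF q \<in> sbox (sF p) e" if q: "q\<in>{(x, y). x \<le> y}" "q \<in> sbox p d" for q
    proof -
      obtain x' y' where q': "q = (x',y')" "x' \<le> y'" using q by auto
      have b: "x \<le> x'" "x' < x + d" "x \<le> y'" "y' < x + d" using q(2) unfolding q' p True sbox_iff by auto
      have sp: "sF p = (x,x)" using True unfolding p sF_def by simp
      show ?thesis
      proof (cases "x' = y'")
        case True
        then show ?thesis using b q' sp by (simp add: sF_def sbox_iff d_def)
      next
        case False
        then have lt: "x' < y'" using q' by simp
        have dd: "d \<le> d0" by (simp add: d_def)
        have h1: "\<lfloor>(2::real)^K * x'\<rfloor> = \<lfloor>2^K * x\<rfloor>" apply (rule d0(2)[rule_format]) using b dd by auto
        have h2: "\<lfloor>(2::real)^K * y'\<rfloor> = \<lfloor>2^K * x\<rfloor>" apply (rule d0(2)[rule_format]) using b dd by auto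
        have "K < lvl x' y'" by (rule lvl_gt[OF lt]) (use h1 h2 in simp)
        then have s: "1 / 2^lvl x' y' < e/2" using pow_le_inv K by fastforce
        have pb: "x' < psi x' y'" "psi x' y' < y' + 1 / 2^lvl x' y'" using psi_bounds[OF lt] by auto
        have "x \<le> psi x' y'" "psi x' y' < x + e" using pb s b d_def by auto
        moreover have "x' < x + e" using b d_def by simp
        ultimately show ?thesis using sp b lt unfolding q' sF_def by (auto simp: sbox_iff)
      qed
    qed
    ultimately show ?thesis by blast
  next
    case False
    then have lt: "x < y" using xy by simp
    define k where "k = lvl x y"
    obtain d1 where d1: "d1 > 0" "\<forall>z'. x \<le> z' \<and> z' < x + d1 \<longrightarrow> \<lfloor>(2::real)^k * z'\<rfloor> = \<lfloor>2^k * x\<rfloor>"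
      using floor_stable by blast
    obtain d2 where d2: "d2 > 0" "\<forall>z'. y \<le> z' \<and> z' < y + d2 \<longrightarrow> \<lfloor>(2::real)^Suc k * z'\<rfloor> = \<lfloor>2^Suc k * y\<rfloor>"
      using floor_stable by blast
    define d where "d = min (min d1 d2) (e/2)"
    have "d > 0" using d1 d2 e by (simp add: d_def)
    moreover have "sF q \<in> sbox (sF p) e" if q: "q\<in>{(x, y). x \<le> y}" "q \<in> sbox p d" for q
    proof -
      obtain x' y' where q': "q = (x',y')" using q by (cases q) auto
      have b: "x \<le> x'" "x' < x + d" "y \<le> y'" "y' < y + d" using q(2) unfolding q' p sbox_iff by auto
      have dd: "d \<le> d1" "d \<le> d2" by (simp_all add: d_def)
      have fx: "\<lfloor>(2::real)^k * x'\<rfloor> = \<lfloor>2^k * x\<rfloor>" apply (rule d1(2)[rule_format]) using b dd by auto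
      have fy2: "\<lfloor>(2::real)^Suc k * y'\<rfloor> = \<lfloor>2^Suc k * y\<rfloor>" apply (rule d2(2)[rule_format]) using b dd by auto

      have fy: "\<lfloor>(2::real)^k * y'\<rfloor> = \<lfloor>2^k * y\<rfloor>" by (rule floor_coarse[OF fy2]) simp
      have lk: "lvl x' y' = k" unfolding k_def by (rule lvl_eqI[OF lt]) (use fx fy k_def in auto)
      have lt': "x' < y'" using lvl_less[of x y] lt fx fy unfolding k_def[symmetric]
        by (intro floor_less_imp[of "2^k * x'" "2^k * y'", simplified]) auto
      have pd: "psi x' y' = psi x y + 2 * (y' - y)"
        by (rule psi_diff) (use lk fy2 k_def in auto)
      have "y' - y < e/2" using b d_def by auto
      then show ?thesis using lt lt' b d_def fy2 lk pd unfolding p q' sF_def k_def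
        by (auto simp: sbox_iff)
    qed
    ultimately show ?thesis by blast
  qed
qed simp



lemma sG_D: "sG q \<in> {(x, y). x \<le> y}"
proof -
  obtain u v where q: "q = (u,v)" by (cases q) auto
  show ?thesis
  proof (cases "u = v")
    case True then show ?thesis unfolding q sG_def by simp
  next
    case False
    show ?thesis
    proof (cases "u < v")
      case True then show ?thesis using up_bounds[OF True] unfolding q sG_def by simp
    next
      case False
      then have "v < u" using \<open>u \<noteq> v\<close> by simp
      then show ?thesis using dn_bounds[OF \<open>v < u\<close>] False \<open>u \<noteq> v\<close> unfolding q sG_def by simp
    qed
  qed
qed

lemma contG: "continuous_map (subtopology (prod_topology sorgenfrey sorgenfrey) UNIV)
   (subtopology (prod_topology sorgenfrey sorgenfrey) {(x, y). x \<le> y}) sG"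
proof (rule cont_local)
  fix p :: "real \<times> real" and e :: real
  assume e: "e > 0"
  obtain u v where p: "p = (u,v)" by (cases p) auto
  show "\<exists>d>0. \<forall>q\<in>UNIV. q \<in> sbox p d \<longrightarrow> sG q \<in> sbox (sG p) e"
  proof (cases "u = v")
    case True
    obtain K where K: "1 / (2::real)^K < e/2" using smallK[OF e] by blast
    obtain d0 where d0: "d0 > 0" "\<forall>z'. u \<le> z' \<and> z' < u + d0 \<longrightarrow> \<lfloor>(2::real)^K * z'\<rfloor> = \<lfloor>2^K * u\<rfloor>"
      using floor_stable by blast
    define d where "d = min d0 (e/2)"
    have "d > 0" using d0 e by (simp add: d_def)
    moreover have "sG q \<in> sbox (sG p) e" if q: "q \<in> sbox p d" for q
    proof -
      obtain x' y' where q': "q = (x',y')" by (cases q) auto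
      have b: "u \<le> x'" "x' < u + d" "u \<le> y'" "y' < u + d" using q unfolding q' p True sbox_iff by auto
      have sp: "sG p = (u,u)" using True unfolding p sG_def by simp
      show ?thesis
      proof (cases "x' = y'")
        case True
        then show ?thesis using b q' sp by (simp add: sG_def sbox_iff d_def)
      next
        case False
        show ?thesis
        proof (cases "x' < y'")
          case lt: True
          have dd: "d \<le> d0" by (simp add: d_def)
          have h1: "\<lfloor>(2::real)^K * x'\<rfloor> = \<lfloor>2^K * u\<rfloor>" apply (rule d0(2)[rule_format]) using b dd by auto
          have h2: "\<lfloor>(2::real)^K * y'\<rfloor> = \<lfloor>2^K * u\<rfloor>" apply (rule d0(2)[rule_format]) using b dd by auto
          have "K < lvl x' y'" by (rule lvl_gt[OF lt]) (use h1 h2 in simp)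
          then have s: "1 / 2^lvl x' y' < e/2" using pow_le_inv K by fastforce
          have pb: "x' < up (lvl x' y') y'" "up (lvl x' y') y' < y' + 1 / 2^lvl x' y'"
            using up_bounds[OF lt] by auto
          have "u \<le> up (lvl x' y') y'" "up (lvl x' y') y' < u + e" using pb s b d_def by auto
          moreover have "x' < u + e" using b d_def by simp
          ultimately show ?thesis using sp b lt unfolding q' sG_def by (auto simp: sbox_iff)
        next
          case ge: False
          then have lt: "y' < x'" using False by simp
          have dd: "d \<le> d0" by (simp add: d_def)
          have h1: "\<lfloor>(2::real)^K * x'\<rfloor> = \<lfloor>2^K * u\<rfloor>" apply (rule d0(2)[rule_format]) using b dd by auto
          have h2: "\<lfloor>(2::real)^K * y'\<rfloor> = \<lfloor>2^K * u\<rfloor>" apply (rule d0(2)[rule_format]) using b dd by auto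
          have "K < lvl y' x'" by (rule lvl_gt[OF lt]) (use h1 h2 in simp)
          then have s: "1 / 2^lvl y' x' < e/2" using pow_le_inv K by fastforce
          have pb: "y' < dn (lvl y' x') x'" "dn (lvl y' x') x' < x' + 1 / 2^lvl y' x'"
            using dn_bounds[OF lt] by auto
          have "u \<le> dn (lvl y' x') x'" "dn (lvl y' x') x' < u + e" using pb s b d_def by auto
          moreover have "y' < u + e" using b d_def by simp
          ultimately show ?thesis using sp b lt unfolding q' sG_def by (auto simp: sbox_iff)
        qed
      qed
    qed
    ultimately show ?thesis by blast
  next
    case False
    show ?thesis
    proof (cases "u < v")
      case lt: True
      define k where "k = lvl u v"
      obtain d1 where d1: "d1 > 0" "\<forall>z'. u \<le> z' \<and> z' < u + d1 \<longrightarrow> \<lfloor>(2::real)^k * z'\<rfloor> = \<lfloor>2^k * u\<rfloor>"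
        using floor_stable by blast
      obtain d2 where d2: "d2 > 0" "\<forall>z'. v \<le> z' \<and> z' < v + d2 \<longrightarrow> \<lfloor>(2::real)^k * z'\<rfloor> = \<lfloor>2^k * v\<rfloor>"
        using floor_stable by blast
      define d where "d = min (min d1 d2) e"
      have "d > 0" using d1 d2 e by (simp add: d_def)
      moreover have "sG q \<in> sbox (sG p) e" if q: "q \<in> sbox p d" for q
      proof -
        obtain x' y' where q': "q = (x',y')" by (cases q) auto
        have b: "u \<le> x'" "x' < u + d" "v \<le> y'" "y' < v + d" using q unfolding q' p sbox_iff by auto
        have dd: "d \<le> d1" "d \<le> d2" by (simp_all add: d_def)
        have fx: "\<lfloor>(2::real)^k * x'\<rfloor> = \<lfloor>2^k * u\<rfloor>" apply (rule d1(2)[rule_format]) using b dd by auto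
        have fy: "\<lfloor>(2::real)^k * y'\<rfloor> = \<lfloor>2^k * v\<rfloor>" apply (rule d2(2)[rule_format]) using b dd by auto
        have lk: "lvl x' y' = k" unfolding k_def by (rule lvl_eqI[OF lt]) (use fx fy k_def in auto)
        have lt': "x' < y'" using lvl_less[of u v] lt fx fy unfolding k_def[symmetric]
          by (intro floor_less_imp[of "2^k * x'" "2^k * y'", simplified]) auto
        have ud: "up k y' = up k v + (y' - v)/2" by (rule up_diff[OF fy])
        have "y' - v < e" using b d_def by auto
        then show ?thesis using lt lt' b d_def lk ud unfolding p q' sG_def k_def
          by (auto simp: sbox_iff)
      qed
      ultimately show ?thesis by blast
    next
      case ge: False
      then have lt: "v < u" using False by simp
      define k where "k = lvl v u"
      obtain d1 where d1: "d1 > 0" "\<forall>z'. u \<le> z' \<and> z' < u + d1 \<longrightarrow> \<lfloor>(2::real)^k * z'\<rfloor> = \<lfloor>2^k * u\<rfloor>"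
        using floor_stable by blast
      obtain d2 where d2: "d2 > 0" "\<forall>z'. v \<le> z' \<and> z' < v + d2 \<longrightarrow> \<lfloor>(2::real)^k * z'\<rfloor> = \<lfloor>2^k * v\<rfloor>"
        using floor_stable by blast
      define d where "d = min (min d1 d2) e"
      have "d > 0" using d1 d2 e by (simp add: d_def)
      moreover have "sG q \<in> sbox (sG p) e" if q: "q \<in> sbox p d" for q
      proof -
        obtain x' y' where q': "q = (x',y')" by (cases q) auto
        have b: "u \<le> x'" "x' < u + d" "v \<le> y'" "y' < v + d" using q unfolding q' p sbox_iff by auto
        have dd: "d \<le> d1" "d \<le> d2" by (simp_all add: d_def)
        have fx: "\<lfloor>(2::real)^k * x'\<rfloor> = \<lfloor>2^k * u\<rfloor>" apply (rule d1(2)[rule_format]) using b dd by auto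
        have fy: "\<lfloor>(2::real)^k * y'\<rfloor> = \<lfloor>2^k * v\<rfloor>" apply (rule d2(2)[rule_format]) using b dd by auto
        have lk: "lvl y' x' = k" unfolding k_def by (rule lvl_eqI[OF lt]) (use fx fy k_def in auto)
        have lt': "y' < x'" using lvl_less[of v u] lt fx fy unfolding k_def[symmetric]
          by (intro floor_less_imp[of "2^k * y'" "2^k * x'", simplified]) auto
        have ud: "dn k x' = dn k u + (x' - u)/2" by (rule dn_diff[OF fx])
        have "x' - u < e" using b d_def by auto
        then show ?thesis using lt lt' b d_def lk ud unfolding p q' sG_def k_def
          by (auto simp: sbox_iff)
      qed
      ultimately show ?thesis by blast
    qed
  qed
qed (rule sG_D)

theorem theorem4p3:
  shows "subtopology (prod_topology sorgenfrey sorgenfrey) {(x, y). x \<le> y}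
           homeomorphic_space prod_topology sorgenfrey sorgenfrey"
proof -
  have "homeomorphic_maps (subtopology (prod_topology sorgenfrey sorgenfrey) {(x, y). x \<le> y})
           (prod_topology sorgenfrey sorgenfrey) sF sG"
    unfolding homeomorphic_maps_def
  proof (intro conjI ballI)
    show "continuous_map (subtopology (prod_topology sorgenfrey sorgenfrey) {(x, y). x \<le> y})
       (prod_topology sorgenfrey sorgenfrey) sF" using contF by simp
    show "continuous_map (prod_topology sorgenfrey sorgenfrey)
       (subtopology (prod_topology sorgenfrey sorgenfrey) {(x, y). x \<le> y}) sG" using contG by simp
  next
    fix p assume "p \<in> topspace (subtopology (prod_topology sorgenfrey sorgenfrey) {(x, y). x \<le> y})"
    then obtain x y where p: "p = (x,y)" "x \<le> y" by auto
    show "sG (sF p) = p"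
    proof (cases "x = y")
      case True then show ?thesis unfolding p sF_def sG_def by simp
    next
      case False then show ?thesis using GF p by simp
    qed
  next
    fix q :: "real \<times> real"
    obtain u v where q: "q = (u,v)" by (cases q) auto
    show "sF (sG q) = q"
    proof (cases "u = v")
      case True then show ?thesis unfolding q sF_def sG_def by simp
    next
      case False then show ?thesis unfolding q using FG1 FG2 by (cases "u < v") auto
    qed
  qed
  then show ?thesis unfolding homeomorphic_space_def by blast
qed

end
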